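(* Let $f$ be a $2\pi$-periodic continuous function with modulus of continuity $\omega(t)$, and let $A=(a_{n,k})$ be a lower triangular infinite matrix of real numbers ($a_{n,k}=0$ for $k>n$) with $a_{n,k}\ge 0$ and $\sum_{k=0}^n a_{n,k}=1$ for all $n$. Let $\beta\ge0$ and suppose \[ \sum_{k=m}^{\infty}(k+1)^{\beta}\left|\frac{a_{n,k}}{(k+1)^{\beta}}-\frac{a_{n,k+1}}{(k+2)^{\beta}}\right|=\mathcal{O}(a_{n,m}) \] for all $m=0,1,\dots,n$ and $n=0,1,\dots$. Then \[ \|T_{n,A}(f)-f\|=\mathcal{O}\left(\omega\left(\frac{\pi}{n+1}\right)+\sum_{v=1}^{n}v^{-1}\omega\left(\frac{\pi}{v}\right)\sum_{j=0}^{v}a_{n,j}\right). \]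
   Context: $S_k(f;x)$ is the $k$-th partial sum of the Fourier series of $f$ at $x$, and $T_{n,A}(f;x):=\sum_{k=0}^n a_{n,k}S_k(f;x)$. $\|\cdot\|$ is the sup-norm. $\omega(\delta)=\sup_{|h|\le\delta}\sup_x|f(x+h)-f(x)|$. The notation $u=\mathcal{O}(v)$ means $u\le Cv$ for a positive constant $C$ (independent of $n$). *)

theory Defs
  imports "HOL-Analysis.Analysis"
begin

definition fourier_a :: "(real \<Rightarrow> real) \<Rightarrow> nat \<Rightarrow> real" where
  "fourier_a f k = (1 / pi) * integral {-pi..pi} (\<lambda>t. f t * cos (real k * t))"

definition fourier_b :: "(real \<Rightarrow> real) \<Rightarrow> nat \<Rightarrow> real" where
  "fourier_b f k = (1 / pi) * integral {-pi..pi} (\<lambda>t. f t * sin (real k * t))"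

definition fourier_partial_sum :: "(real \<Rightarrow> real) \<Rightarrow> nat \<Rightarrow> real \<Rightarrow> real" where
  "fourier_partial_sum f k x =
     fourier_a f 0 / 2 +
     (\<Sum>j\<in>{1..k}. fourier_a f j * cos (real j * x) + fourier_b f j * sin (real j * x))"

definition T_mean :: "(nat \<Rightarrow> nat \<Rightarrow> real) \<Rightarrow> (real \<Rightarrow> real) \<Rightarrow> nat \<Rightarrow> real \<Rightarrow> real" where
  "T_mean a f n x = (\<Sum>k\<in>{0..n}. a n k * fourier_partial_sum f k x)"

definition sup_norm :: "(real \<Rightarrow> real) \<Rightarrow> real" where
  "sup_norm g = (SUP x. \<bar>g x\<bar>)"

definition modulus_cont :: "(real \<Rightarrow> real) \<Rightarrow> real \<Rightarrow> real" where
  "modulus_cont f \<delta> = (SUP p\<in>{(h, x). \<bar>h\<bar> \<le> \<delta>}. \<bar>f (snd p + fst p) - f (snd p)\<bar>)"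

end

theory Submission
  imports Defs
begin

definition Dk :: "nat \<Rightarrow> real \<Rightarrow> real" where
  "Dk k u = 1/2 + (\<Sum>j\<in>{1..k}. cos (real j * u))"

definition Kn :: "(nat \<Rightarrow> nat \<Rightarrow> real) \<Rightarrow> nat \<Rightarrow> real \<Rightarrow> real" where
  "Kn a n u = (\<Sum>k\<in>{0..n}. a n k * Dk k u)"

lemma Dk_Suc: "Dk (Suc k) u = Dk k u + cos (real (Suc k) * u)"
  by (simp add: Dk_def)

lemma Dk_even: "Dk k (-u) = Dk k u"
  by (simp add: Dk_def)

lemma Kn_even: "Kn a n (-u) = Kn a n u"
  by (simp add: Kn_def Dk_even)

lemma Dk_sin: "2 * sin (u/2) * Dk k u = sin ((real k + 1/2) * u)"
proof (induction k)
  case 0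
  then show ?case by (simp add: Dk_def)
next
  case (Suc k)
  have e1: "(real (Suc k) + 1/2) * u = real (Suc k) * u + u/2" by (simp add: algebra_simps)
  have e2: "(real k + 1/2) * u = real (Suc k) * u - u/2" by (simp add: algebra_simps)
  show ?case unfolding Dk_Suc distrib_left Suc e1 e2 sin_add sin_diff
    by (simp add: algebra_simps)
qed

lemma prod_sin: fixes A h :: real shows "2 * sin h * sin (A + h) = cos A - cos (A + h + h)"
proof -
  have "cos A = cos ((A + h) - h)" by simp
  also have "\<dots> = cos (A+h) * cos h + sin (A+h) * sin h" by (metis cos_diff)
  finally have 1: "cos A = cos (A+h) * cos h + sin (A+h) * sin h" .
  have 2: "cos (A + h + h) = cos (A+h) * cos h - sin (A+h) * sin h" by (rule cos_add)
  show ?thesis unfolding 1 2 by (simp add: algebra_simps)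
qed

lemma sinsum: "2 * sin (u/2) * (\<Sum>i\<in>{m..m+p}. sin ((real i + 1/2) * u))
   = cos (real m * u) - cos ((real (m+p) + 1) * u)"
proof (induction p)
  case 0
  have e1: "(real m + 1/2) * u = real m * u + u/2" by (simp add: algebra_simps)
  have e2: "(real m + 1) * u = real m * u + u/2 + u/2" by (simp add: algebra_simps)
  have "2 * sin (u/2) * sin ((real m + 1/2) * u) = cos (real m * u) - cos ((real m + 1) * u)"
    unfolding e1 e2 by (rule prod_sin)
  then show ?case by simp
next
  case (Suc p)
  have "{m..m + Suc p} = insert (Suc (m+p)) {m..m+p}" by auto
  then have s: "(\<Sum>i\<in>{m..m+Suc p}. sin ((real i + 1/2) * u)) =
     sin ((real (m+p) + 3/2) * u) + (\<Sum>i\<in>{m..m+p}. sin ((real i + 1/2) * u))"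
    by (simp add: algebra_simps)
  have e1: "(real (m+p) + 3/2) * u = (real (m+p) + 1) * u + u/2" by (simp add: algebra_simps)
  have e2: "(real (m + Suc p) + 1) * u = (real (m+p) + 1) * u + u/2 + u/2" by (simp add: algebra_simps)
  show ?case unfolding s distrib_left Suc e1 e2
    using prod_sin[of "u/2" "(real (m+p) + 1) * u"] by simp
qed

lemma abel:
  fixes b w :: "nat \<Rightarrow> real"
  shows "(\<Sum>k\<in>{m..m+p}. b k * w k) =
    (\<Sum>k\<in>{m..m+p}. (b k - b (Suc k)) * (\<Sum>j\<in>{m..k}. w j)) + b (Suc (m+p)) * (\<Sum>j\<in>{m..m+p}. w j)"
proof (induction p)
  case 0
  then show ?case by (simp add: algebra_simps)
next
  case (Suc p)
  have I: "{m..m + Suc p} = insert (Suc (m+p)) {m..m+p}" by auto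
  show ?case unfolding I using Suc by (simp add: algebra_simps)
qed

lemma telescope_abs:
  fixes b :: "nat \<Rightarrow> real"
  shows "\<bar>b m - b (Suc (m+p))\<bar> \<le> (\<Sum>k\<in>{m..m+p}. \<bar>b k - b (Suc k)\<bar>)"
proof (induction p)
  case 0
  then show ?case by simp
next
  case (Suc p)
  have I: "{m..m + Suc p} = insert (Suc (m+p)) {m..m+p}" by auto
  show ?case unfolding I using Suc by simp
qed

lemma telescope_mono:
  fixes c :: "nat \<Rightarrow> real"
  shows "(\<Sum>k\<in>{m..m+p}. c (Suc k) - c k) = c (Suc (m+p)) - c m"
proof (induction p)
  case 0
  then show ?case by simp
next
  case (Suc p)
  have I: "{m..m + Suc p} = insert (Suc (m+p)) {m..m+p}" by auto
  show ?case unfolding I using Suc by simp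
qed

lemma abel_bound:
  fixes c w :: "nat \<Rightarrow> real"
  assumes mono: "\<And>j. c j \<le> c (Suc j)" and pos: "\<And>j. 0 \<le> c j"
    and B: "\<And>j. m \<le> j \<Longrightarrow> \<bar>\<Sum>i\<in>{m..j}. w i\<bar> \<le> B"
  shows "\<bar>\<Sum>j\<in>{m..m+p}. c j * w j\<bar> \<le> 2 * B * c (Suc (m+p))"
proof -
  have B0: "0 \<le> B" using B[of m] by simp
  have "\<bar>\<Sum>j\<in>{m..m+p}. c j * w j\<bar> \<le>
     \<bar>\<Sum>k\<in>{m..m+p}. (c k - c (Suc k)) * (\<Sum>j\<in>{m..k}. w j)\<bar> + \<bar>c (Suc (m+p)) * (\<Sum>j\<in>{m..m+p}. w j)\<bar>"
    unfolding abel[of c w m p] by (rule abs_triangle_ineq)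
  also have "\<dots> \<le> (\<Sum>k\<in>{m..m+p}. (c (Suc k) - c k) * B) + c (Suc (m+p)) * B"
  proof (rule add_mono)
    have "\<bar>\<Sum>k\<in>{m..m+p}. (c k - c (Suc k)) * (\<Sum>j\<in>{m..k}. w j)\<bar> \<le>
       (\<Sum>k\<in>{m..m+p}. \<bar>(c k - c (Suc k)) * (\<Sum>j\<in>{m..k}. w j)\<bar>)" by (rule sum_abs)
    also have "\<dots> \<le> (\<Sum>k\<in>{m..m+p}. (c (Suc k) - c k) * B)"
    proof (rule sum_mono)
      fix k assume k: "k \<in> {m..m+p}"
      have "\<bar>(c k - c (Suc k)) * (\<Sum>j\<in>{m..k}. w j)\<bar> = (c (Suc k) - c k) * \<bar>\<Sum>j\<in>{m..k}. w j\<bar>"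
        using mono[of k] by (simp add: abs_mult)
      also have "\<dots> \<le> (c (Suc k) - c k) * B"
        using mono[of k] B[of k] k by (intro mult_left_mono) auto
      finally show "\<bar>(c k - c (Suc k)) * (\<Sum>j\<in>{m..k}. w j)\<bar> \<le> (c (Suc k) - c k) * B" .
    qed
    finally show "\<bar>\<Sum>k\<in>{m..m+p}. (c k - c (Suc k)) * (\<Sum>j\<in>{m..k}. w j)\<bar> \<le>
       (\<Sum>k\<in>{m..m+p}. (c (Suc k) - c k) * B)" .
    show "\<bar>c (Suc (m+p)) * (\<Sum>j\<in>{m..m+p}. w j)\<bar> \<le> c (Suc (m+p)) * B"
      using pos[of "Suc (m+p)"] B[of "m+p"] by (simp add: abs_mult mult_left_mono)
  qed
  also have "(\<Sum>k\<in>{m..m+p}. (c (Suc k) - c k) * B) = (c (Suc (m+p)) - c m) * B"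
    unfolding sum_distrib_right[symmetric] telescope_mono ..
  also have "(c (Suc (m+p)) - c m) * B + c (Suc (m+p)) * B \<le> 2 * B * c (Suc (m+p))"
    using pos[of m] B0 by (simp add: algebra_simps mult_nonneg_nonneg)
  finally show ?thesis .
qed

lemma per_nat:
  fixes f :: "real \<Rightarrow> 'b"
  assumes per: "\<And>x. f (x + 2 * pi) = f x"
  shows "f (x + 2 * pi * real n) = f x"
proof (induction n)
  case 0 then show ?case by simp
next
  case (Suc n)
  have e: "x + 2*pi*real (Suc n) = (x + 2*pi*real n) + 2*pi" by (simp add: algebra_simps)
  have "f (x + 2*pi*real (Suc n)) = f ((x + 2*pi*real n) + 2*pi)" by (simp only: e)
  also have "\<dots> = f (x + 2*pi*real n)" by (rule per)
  also have "\<dots> = f x" by (rule Suc)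
  finally show ?case .
qed

lemma per_int:
  fixes f :: "real \<Rightarrow> 'b"
  assumes per: "\<And>x. f (x + 2 * pi) = f x"
  shows "f (x + 2 * pi * real_of_int k) = f x"
proof (cases "k \<ge> 0")
  case True
  define n where "n = nat k"
  have "k = int n" using True unfolding n_def by simp
  then show ?thesis using per_nat[of f, OF per, of x n] by simp
next
  case False
  define n where "n = nat (-k)"
  have k: "k = - int n" using False unfolding n_def by simp
  have "f x = f ((x - 2 * pi * real n) + 2 * pi * real n)" by simp
  also have "\<dots> = f (x - 2 * pi * real n)" by (rule per_nat[of f, OF per])
  finally show ?thesis using k by simp
qed

lemma floor_reduce:
  fixes x :: real
  obtains k :: int where "-pi \<le> x - 2 * pi * real_of_int k" "x - 2 * pi * real_of_int k \<le> pi"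
proof -
  define k where "k = \<lfloor>(x + pi) / (2 * pi)\<rfloor>"
  have 1: "real_of_int k \<le> (x + pi) / (2 * pi)" unfolding k_def by (rule of_int_floor_le)
  have 2: "(x + pi) / (2 * pi) < real_of_int k + 1" unfolding k_def by (rule real_of_int_floor_add_one_gt)
  have p: "pi > 0" by (rule pi_gt_zero)
  from 1 have "2 * pi * real_of_int k \<le> x + pi" using p by (simp add: field_simps)
  moreover from 2 have "x + pi < 2 * pi * real_of_int k + 2 * pi" using p by (simp add: field_simps)
  ultimately show ?thesis using that[of k] by linarith
qed

lemma cont_bounded:
  fixes f :: "real \<Rightarrow> real"
  assumes cont: "continuous_on UNIV f" and per: "\<And>x. f (x + 2 * pi) = f x"
  obtains B where "\<And>x. \<bar>f x\<bar> \<le> B"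
proof -
  have "compact (f ` {-pi..pi})"
    by (rule compact_continuous_image) (auto intro: continuous_on_subset[OF cont])
  then have "bounded (f ` {-pi..pi})" by (rule compact_imp_bounded)
  then obtain B where B0: "\<forall>z\<in>f ` {-pi..pi}. norm z \<le> B"
    unfolding bounded_iff by blast
  have B: "\<And>y. y \<in> {-pi..pi} \<Longrightarrow> \<bar>f y\<bar> \<le> B" using B0 by auto
  have "\<bar>f x\<bar> \<le> B" for x
  proof -
    obtain k :: int where k: "-pi \<le> x - 2 * pi * real_of_int k" "x - 2 * pi * real_of_int k \<le> pi"
      by (rule floor_reduce)
    have "f x = f ((x - 2 * pi * real_of_int k) + 2 * pi * real_of_int k)" by simp
    also have "\<dots> = f (x - 2 * pi * real_of_int k)" by (rule per_int[of f, OF per])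
    finally show ?thesis using B[of "x - 2 * pi * real_of_int k"] k by simp
  qed
  then show ?thesis using that by blast
qed

lemma modulus_le:
  fixes f :: "real \<Rightarrow> real"
  assumes B: "\<And>x. \<bar>f x\<bar> \<le> B" and h: "\<bar>h\<bar> \<le> \<delta>"
  shows "\<bar>f (y + h) - f y\<bar> \<le> modulus_cont f \<delta>"
  unfolding modulus_cont_def
proof (rule cSUP_upper2[where x="(h, y)"])
  show "(h, y) \<in> {(h, x). \<bar>h\<bar> \<le> \<delta>}" using h by simp
  show "bdd_above ((\<lambda>p. \<bar>f (snd p + fst p) - f (snd p)\<bar>) ` {(h, x). \<bar>h\<bar> \<le> \<delta>})"
  proof (rule bdd_aboveI2)
    fix p show "\<bar>f (snd p + fst p) - f (snd p)\<bar> \<le> 2 * B"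
      using B[of "snd p + fst p"] B[of "snd p"] by linarith
  qed
qed simp

lemma modulus_nonneg:
  fixes f :: "real \<Rightarrow> real"
  assumes B: "\<And>x. \<bar>f x\<bar> \<le> B" and d: "0 \<le> \<delta>"
  shows "0 \<le> modulus_cont f \<delta>"
  using modulus_le[OF B, where h=0 and y=0 and \<delta>=\<delta>] d by simp

lemma sin_lower:
  fixes y :: real
  assumes y0: "0 \<le> y" and y1: "y \<le> pi/2"
  shows "y / 4 \<le> sin y"
proof (cases "y \<le> pi/3")
  case True
  let ?h = "\<lambda>t::real. sin t - t * cos t"
  have "?h 0 \<le> ?h y"
  proof (rule DERIV_nonneg_imp_nondecreasing[OF y0])
    fix t assume t: "0 \<le> t" "t \<le> y"
    have "DERIV ?h t :> cos t - (1 * cos t + t * (- sin t))"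
      by (auto intro!: derivative_eq_intros)
    moreover have "0 \<le> t * sin t" using t y1 pi_gt_zero
      by (intro mult_nonneg_nonneg sin_ge_zero) auto
    ultimately show "\<exists>d. DERIV ?h t :> d \<and> 0 \<le> d" by (intro exI[of _ "t * sin t"]) (auto simp: algebra_simps)
  qed
  then have 1: "y * cos y \<le> sin y" by simp
  have "cos (pi/3) \<le> cos y" using True y0 by (intro cos_monotone_0_pi_le) auto
  then have "1/2 \<le> cos y" by (simp add: cos_60)
  then have "y * (1/2) \<le> y * cos y" using y0 by (intro mult_left_mono) auto
  then show ?thesis using 1 y0 by linarith
next
  case False
  have "sin (pi/3) \<le> sin y" using False y1 pi_gt_zero
    by (subst sin_mono_le_eq) auto
  moreover have "1 \<le> sqrt 3" using real_sqrt_le_mono[of 1 3] by simp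
  ultimately have "1/2 \<le> sin y" unfolding sin_60 by linarith
  moreover have "y / 4 \<le> 1/2" using y1 pi_less_4 by simp
  ultimately show ?thesis by linarith
qed

lemma periodic_integral:
  fixes h :: "real \<Rightarrow> real"
  assumes cont: "continuous_on UNIV h" and per: "\<And>x. h (x + 2 * pi) = h x"
  shows "integral {c..c + 2*pi} h = integral {-pi..pi} h"
proof -
  obtain k :: int where k: "-pi \<le> (c + 2*pi) - 2 * pi * real_of_int k" "(c + 2*pi) - 2 * pi * real_of_int k \<le> pi"
    by (rule floor_reduce)
  define c' where "c' = c + 2 * pi * real_of_int (-k)"
  have c'e: "c' = c - 2*pi*real_of_int k" by (simp add: c'_def)
  have c'1: "c' \<le> -pi" and c'2: "-pi \<le> c' + 2 * pi" using k c'e by linarith+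
  have hk: "h \<circ> (\<lambda>x. x + 2 * pi * real_of_int (-k)) = h"
  proof
    fix x show "(h \<circ> (\<lambda>x. x + 2 * pi * real_of_int (-k))) x = h x"
      using per_int[of h, OF per, of x "-k"] by (simp add: o_def)
  qed
  have h2: "h \<circ> (\<lambda>x. x + 2 * pi) = h"
    using per by (simp add: o_def)
  have ci: "\<And>a b. continuous_on {a..b} h" by (rule continuous_on_subset[OF cont]) auto
  have "integral {c..c + 2*pi} h = integral {c..c + 2*pi} (h \<circ> (\<lambda>x. x + 2 * pi * real_of_int (-k)))"
    by (simp only: hk)
  also have "\<dots> = integral {c'..c' + 2*pi} h"
    unfolding c'_def by (subst integral_shift[OF ci]) (simp only: add_ac)
  also have "\<dots> = integral {c'..-pi} h + integral {-pi..c'+2*pi} h"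
    using c'1 c'2 Henstock_Kurzweil_Integration.integral_combine[OF c'1 c'2 integrable_continuous_interval[OF ci]] by simp
  also have "integral {c'..-pi} h = integral {c'..-pi} (h \<circ> (\<lambda>x. x + 2 * pi))"
    by (simp only: h2)
  also have "\<dots> = integral {c'+2*pi..pi} h"
    by (subst integral_shift[OF ci]) simp
  also have "integral {c'+2*pi..pi} h + integral {-pi..c'+2*pi} h = integral {-pi..pi} h"
    using c'1 c'2 Henstock_Kurzweil_Integration.integral_combine[of "-pi" "c'+2*pi" pi h, OF _ _ integrable_continuous_interval[OF ci]] by simp
  finally show ?thesis .
qed

lemma cont_int:
  fixes g :: "real \<Rightarrow> real"
  shows "continuous_on UNIV g \<Longrightarrow> g integrable_on {a..b}"
  by (rule integrable_continuous_interval) (auto intro: continuous_on_subset)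

lemma Dk_cont: "continuous_on S (\<lambda>u. Dk k (g u))" if "continuous_on S g" for g :: "real \<Rightarrow> real"
  unfolding Dk_def
  by (intro continuous_on_add continuous_on_const continuous_on_sum continuous_on_cos continuous_on_mult_left that)

lemma Kn_cont: "continuous_on S (\<lambda>u. Kn a n (g u))" if "continuous_on S g" for g :: "real \<Rightarrow> real"
  unfolding Kn_def by (intro continuous_intros Dk_cont that)

lemma int_cos_zero:
  assumes j: "j \<ge> 1"
  shows "integral {-pi..pi} (\<lambda>t. cos (real j * (t - x))) = 0"
proof -
  let ?F = "\<lambda>t. sin (real j * (t - x)) / real j"
  have jp: "real j > 0" using j by simp
  have "((\<lambda>t. cos (real j * (t - x))) has_integral (?F pi - ?F (-pi))) {-pi..pi}"
  proof (rule fundamental_theorem_of_calculus)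
    show "-pi \<le> pi" by simp
    fix t assume "t \<in> {-pi..pi}"
    have "(?F has_real_derivative (cos (real j * (t - x)) * (real j * (1 - 0)) / real j)) (at t within {-pi..pi})"
      using j by (intro derivative_eq_intros) auto
    then have "(?F has_real_derivative (cos (real j * (t - x)))) (at t within {-pi..pi})"
      using jp by simp
    then show "(?F has_vector_derivative (cos (real j * (t - x)))) (at t within {-pi..pi})"
      by (simp add: has_real_derivative_iff_has_vector_derivative)
  qed
  moreover have "?F pi - ?F (-pi) = 0"
  proof -
    have "sin (real j * (pi - x)) = sin (real j * (-pi - x))"
      by (simp add: right_diff_distrib sin_diff sin_add mult.commute)
    then show ?thesis by simp
  qed
  ultimately show ?thesis by (simp add: integral_unique)
qed

lemma Dk_int: "integral {-pi..pi} (\<lambda>t. Dk k (t - x)) = pi"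
proof (induction k)
  case 0
  then show ?case by (simp add: Dk_def)
next
  case (Suc k)
  have "integral {-pi..pi} (\<lambda>t. Dk (Suc k) (t - x)) =
     integral {-pi..pi} (\<lambda>t. Dk k (t - x)) + integral {-pi..pi} (\<lambda>t. cos (real (Suc k) * (t - x)))"
    unfolding Dk_Suc
    by (intro integral_add cont_int continuous_intros Dk_cont)
  then show ?case using Suc int_cos_zero[of "Suc k" x] by simp
qed

lemma S_rep:
  fixes f :: "real \<Rightarrow> real"
  assumes cont: "continuous_on UNIV f"
  shows "integral {-pi..pi} (\<lambda>t. f t * Dk k (t - x)) = pi * fourier_partial_sum f k x"
proof (induction k)
  case 0
  have "integral {-pi..pi} (\<lambda>t. f t * Dk 0 (t - x)) = integral {-pi..pi} (\<lambda>t. (1/2) * f t)"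
    by (simp add: Dk_def mult.commute)
  also have "\<dots> = (1/2) * integral {-pi..pi} f"
    by (rule integral_mult[symmetric], rule cont_int[OF cont])
  finally show ?case by (simp add: fourier_partial_sum_def fourier_a_def)
next
  case (Suc k)
  let ?j = "real (Suc k)"
  have ic: "(\<lambda>t. f t * cos (?j * t)) integrable_on {-pi..pi}"
    by (intro cont_int continuous_intros cont)
  have isn: "(\<lambda>t. f t * sin (?j * t)) integrable_on {-pi..pi}"
    by (intro cont_int continuous_intros cont)
  have eq: "(\<lambda>t. f t * Dk (Suc k) (t - x)) = (\<lambda>t. f t * Dk k (t - x) +
       (cos (?j * x) * (f t * cos (?j * t)) + sin (?j * x) * (f t * sin (?j * t))))"
    by (rule ext) (simp add: Dk_Suc right_diff_distrib cos_diff algebra_simps)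
  have "integral {-pi..pi} (\<lambda>t. f t * Dk (Suc k) (t - x)) =
     integral {-pi..pi} (\<lambda>t. f t * Dk k (t - x)) +
     (integral {-pi..pi} (\<lambda>t. cos (?j * x) * (f t * cos (?j * t))) +
      integral {-pi..pi} (\<lambda>t. sin (?j * x) * (f t * sin (?j * t))))"
    unfolding eq
    apply (subst integral_add)
      apply (intro integrable_add cont_int continuous_intros Dk_cont cont)+
    apply (subst integral_add)
      apply (intro integrable_add cont_int continuous_intros Dk_cont cont)+
    apply (rule refl)
    done
  also have "integral {-pi..pi} (\<lambda>t. cos (?j * x) * (f t * cos (?j * t))) =
      cos (?j * x) * integral {-pi..pi} (\<lambda>t. f t * cos (?j * t))"
    by (rule integral_mult[symmetric, OF ic])
  also have "integral {-pi..pi} (\<lambda>t. sin (?j * x) * (f t * sin (?j * t))) =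
      sin (?j * x) * integral {-pi..pi} (\<lambda>t. f t * sin (?j * t))"
    by (rule integral_mult[symmetric, OF isn])
  finally show ?case using Suc
    by (simp add: fourier_partial_sum_def fourier_a_def fourier_b_def algebra_simps)
qed

lemma T_rep:
  fixes f :: "real \<Rightarrow> real"
  assumes cont: "continuous_on UNIV f"
  shows "integral {-pi..pi} (\<lambda>t. f t * Kn a n (t - x)) = pi * T_mean a f n x"
proof -
  have eq: "(\<lambda>t. f t * Kn a n (t - x)) = (\<lambda>t. \<Sum>k\<in>{0..n}. a n k * (f t * Dk k (t - x)))"
    by (rule ext) (simp add: Kn_def sum_distrib_left algebra_simps)
  have "integral {-pi..pi} (\<lambda>t. \<Sum>k\<in>{0..n}. a n k * (f t * Dk k (t - x))) =
     (\<Sum>k\<in>{0..n}. integral {-pi..pi} (\<lambda>t. a n k * (f t * Dk k (t - x))))"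
    by (rule integral_sum) (auto intro!: cont_int continuous_intros Dk_cont cont)
  also have "\<dots> = (\<Sum>k\<in>{0..n}. a n k * (pi * fourier_partial_sum f k x))"
  proof (rule sum.cong[OF refl])
    fix k
    have "integral {-pi..pi} (\<lambda>t. a n k * (f t * Dk k (t - x))) =
       a n k * integral {-pi..pi} (\<lambda>t. f t * Dk k (t - x))"
      by (rule integral_mult[symmetric]) (auto intro!: cont_int continuous_intros Dk_cont cont)
    then show "integral {-pi..pi} (\<lambda>t. a n k * (f t * Dk k (t - x))) = a n k * (pi * fourier_partial_sum f k x)"
      using S_rep[OF cont, of k x] by simp
  qed
  finally show ?thesis unfolding eq T_mean_def by (simp add: sum_distrib_left algebra_simps)
qed

lemma Kn_int:
  assumes rowsum: "(\<Sum>k\<in>{0..n}. a n k) = 1"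
  shows "integral {-pi..pi} (\<lambda>t. Kn a n (t - x)) = pi"
proof -
  have "integral {-pi..pi} (\<lambda>t. Kn a n (t - x)) = (\<Sum>k\<in>{0..n}. integral {-pi..pi} (\<lambda>t. a n k * Dk k (t - x)))"
    unfolding Kn_def by (rule integral_sum) (auto intro!: cont_int continuous_intros Dk_cont)
  also have "\<dots> = (\<Sum>k\<in>{0..n}. a n k * pi)"
  proof (rule sum.cong[OF refl])
    fix k
    have "integral {-pi..pi} (\<lambda>t. a n k * Dk k (t - x)) = a n k * integral {-pi..pi} (\<lambda>t. Dk k (t - x))"
      by (rule integral_mult[symmetric]) (auto intro!: cont_int continuous_intros Dk_cont)
    then show "integral {-pi..pi} (\<lambda>t. a n k * Dk k (t - x)) = a n k * pi" using Dk_int by simp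
  qed
  finally show ?thesis using rowsum by (simp add: sum_distrib_right[symmetric])
qed

lemma Kn_per: "Kn a n (u + 2 * pi) = Kn a n u"
proof -
  have "cos (real j * (u + 2 * pi)) = cos (real j * u)" for j
    using per_nat[of cos, OF cos_periodic, of "real j * u" j] by (simp add: algebra_simps)
  then show ?thesis by (simp add: Kn_def Dk_def)
qed

lemma main_rep:
  fixes f :: "real \<Rightarrow> real"
  assumes cont: "continuous_on UNIV f" and per: "\<And>x. f (x + 2 * pi) = f x"
    and rowsum: "(\<Sum>k\<in>{0..n}. a n k) = 1"
  shows "T_mean a f n x - f x = (1/pi) * integral {-pi..pi} (\<lambda>u. (f (x + u) - f x) * Kn a n u)"
proof -
  let ?g = "\<lambda>t. (f t - f x) * Kn a n (t - x)"
  let ?h = "\<lambda>u. (f (x + u) - f x) * Kn a n u"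
  have gc: "continuous_on UNIV ?g" by (intro continuous_intros Kn_cont cont)
  have hc: "continuous_on UNIV ?h"
    by (intro continuous_intros Kn_cont continuous_on_compose2[OF cont]) auto
  have "integral {-pi..pi} ?g = integral {-pi..pi} (\<lambda>t. f t * Kn a n (t - x)) - f x * integral {-pi..pi} (\<lambda>t. Kn a n (t - x))"
  proof -
    have "integral {-pi..pi} ?g = integral {-pi..pi} (\<lambda>t. f t * Kn a n (t - x)) - integral {-pi..pi} (\<lambda>t. f x * Kn a n (t - x))"
      unfolding left_diff_distrib
      by (rule integral_diff) (auto intro!: cont_int continuous_intros Kn_cont cont)
    moreover have "integral {-pi..pi} (\<lambda>t. f x * Kn a n (t - x)) = f x * integral {-pi..pi} (\<lambda>t. Kn a n (t - x))"
      by (rule integral_mult[symmetric]) (auto intro!: cont_int continuous_intros Kn_cont)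
    ultimately show ?thesis by simp
  qed
  also have "\<dots> = pi * (T_mean a f n x - f x)"
    using T_rep[OF cont] Kn_int[of a n, OF rowsum] by (simp add: algebra_simps)
  finally have 1: "integral {-pi..pi} ?g = pi * (T_mean a f n x - f x)" .
  have "integral {-pi..pi} ?g = integral {-pi - x..pi - x} (?g \<circ> (\<lambda>u. u + x))"
    by (subst integral_shift) (auto intro: continuous_on_subset[OF gc])
  also have "?g \<circ> (\<lambda>u. u + x) = ?h" by (rule ext) (simp add: o_def add.commute)
  also have "integral {-pi - x..pi - x} ?h = integral {(-pi - x)..(-pi - x) + 2*pi} ?h"
    by (simp add: algebra_simps)
  also have "\<dots> = integral {-pi..pi} ?h"
  proof (rule periodic_integral[OF hc])
    fix u
    have "f (x + (u + 2 * pi)) = f (x + u)" using per[of "x + u"] by (simp add: add.assoc)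
    then show "?h (u + 2 * pi) = ?h u" by (simp add: Kn_per)
  qed
  finally have 2: "integral {-pi..pi} ?g = integral {-pi..pi} ?h" .
  show ?thesis using 1 2 pi_gt_zero by (simp add: field_simps)
qed

lemma Kn_bound0:
  assumes nonneg: "\<And>k. 0 \<le> a n k" and rowsum: "(\<Sum>k\<in>{0..n}. a n k) = 1"
  shows "\<bar>Kn a n u\<bar> \<le> real n + 1"
proof -
  have D: "\<bar>Dk k u\<bar> \<le> real n + 1" if "k \<le> n" for k
  proof -
    have "\<bar>\<Sum>j\<in>{1..k}. cos (real j * u)\<bar> \<le> (\<Sum>j\<in>{1..k}. \<bar>cos (real j * u)\<bar>)" by (rule sum_abs)
    also have "\<dots> \<le> (\<Sum>j\<in>{1..k}. 1)" by (rule sum_mono) simp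
    finally have "\<bar>\<Sum>j\<in>{1..k}. cos (real j * u)\<bar> \<le> real k" by simp
    then show ?thesis using that unfolding Dk_def by (simp add: abs_le_iff)
  qed
  have "\<bar>Kn a n u\<bar> \<le> (\<Sum>k\<in>{0..n}. \<bar>a n k * Dk k u\<bar>)" unfolding Kn_def by (rule sum_abs)
  also have "\<dots> \<le> (\<Sum>k\<in>{0..n}. a n k * (real n + 1))"
    by (rule sum_mono) (auto simp: abs_mult nonneg intro!: mult_left_mono D)
  also have "\<dots> = real n + 1" using rowsum by (simp add: sum_distrib_right[symmetric])
  finally show ?thesis .
qed

definition Tt :: "(nat \<Rightarrow> nat \<Rightarrow> real) \<Rightarrow> nat \<Rightarrow> real \<Rightarrow> nat \<Rightarrow> real" where
  "Tt a n \<beta> k = (real k + 1) powr \<beta> *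
      \<bar>a n k / (real k + 1) powr \<beta> - a n (k + 1) / (real k + 2) powr \<beta>\<bar>"

lemma Tt_nonneg: "0 \<le> Tt a n \<beta> k"
  unfolding Tt_def by simp

lemma Tt_alt: "Tt a n \<beta> k = (real k + 1) powr \<beta> *
   \<bar>a n k / (real k + 1) powr \<beta> - a n (Suc k) / (real (Suc k) + 1) powr \<beta>\<bar>"
  unfolding Tt_def by (simp add: add.commute add.left_commute)

lemma quasi_mono:
  assumes lower: "\<And>k. n < k \<Longrightarrow> a n k = 0" and nonneg: "\<And>k. 0 \<le> a n k"
    and condn: "\<And>m. m \<le> n \<Longrightarrow> (\<Sum>k\<in>{m..n}. Tt a n \<beta> k) \<le> C0 * a n m"
    and jv: "j \<le> v" "v \<le> n" and beta: "0 \<le> \<beta>"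
  shows "a n v \<le> C0 * a n j"
proof -
  define b where "b k = a n k / (real k + 1) powr \<beta>" for k
  have "{v..n} = {v..v + (n - v)}" using jv by auto
  have "a n v = (real v + 1) powr \<beta> * \<bar>b v - b (Suc (v + (n - v)))\<bar>"
    using jv lower[of "Suc n"] nonneg[of v] by (simp add: b_def)
  also have "\<dots> \<le> (real v + 1) powr \<beta> * (\<Sum>k\<in>{v..v + (n - v)}. \<bar>b k - b (Suc k)\<bar>)"
    by (intro mult_left_mono telescope_abs) simp
  also have "\<dots> = (\<Sum>k\<in>{v..n}. (real v + 1) powr \<beta> * \<bar>b k - b (Suc k)\<bar>)"
    using jv by (simp add: sum_distrib_left)
  also have "\<dots> \<le> (\<Sum>k\<in>{v..n}. Tt a n \<beta> k)"
  proof (rule sum_mono)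
    fix k assume k: "k \<in> {v..n}"
    have "(real v + 1) powr \<beta> \<le> (real k + 1) powr \<beta>" 
      using k beta by (intro powr_mono2) auto
    then show "(real v + 1) powr \<beta> * \<bar>b k - b (Suc k)\<bar> \<le> Tt a n \<beta> k"
      unfolding Tt_alt b_def by (intro mult_right_mono) auto
  qed
  also have "\<dots> \<le> (\<Sum>k\<in>{j..n}. Tt a n \<beta> k)"
    using jv by (intro sum_mono2) (auto simp: Tt_nonneg)
  also have "\<dots> \<le> C0 * a n j" using condn jv by simp
  finally show ?thesis .
qed

lemma sumA:
  assumes lower: "\<And>k. n < k \<Longrightarrow> a n k = 0" and nonneg: "\<And>k. 0 \<le> a n k"
    and condn: "\<And>m. m \<le> n \<Longrightarrow> (\<Sum>k\<in>{m..n}. Tt a n \<beta> k) \<le> C0 * a n m"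
    and v: "v \<le> n" and beta: "0 \<le> \<beta>"
  shows "(real v + 1) * a n v \<le> C0 * (\<Sum>j\<in>{0..v}. a n j)"
proof -
  have "(real v + 1) * a n v = (\<Sum>j\<in>{0..v}. a n v)" by simp
  also have "\<dots> \<le> (\<Sum>j\<in>{0..v}. C0 * a n j)"
    by (rule sum_mono) (rule quasi_mono[OF lower nonneg condn], auto simp: v beta)
  finally show ?thesis by (simp add: sum_distrib_left)
qed

lemma sin_partial:
  assumes s: "0 < sin (u/2)"
  shows "\<bar>\<Sum>i\<in>{m..m+p}. sin ((real i + 1/2) * u)\<bar> \<le> 1 / sin (u/2)"
proof -
  have "\<bar>2 * sin (u/2) * (\<Sum>i\<in>{m..m+p}. sin ((real i + 1/2) * u))\<bar> \<le> 2"
    unfolding sinsum using abs_cos_le_one[of "real m * u"] abs_cos_le_one[of "(real (m+p) + 1) * u"]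
    by linarith
  then have "2 * sin (u/2) * \<bar>\<Sum>i\<in>{m..m+p}. sin ((real i + 1/2) * u)\<bar> \<le> 2"
    using s by (simp add: abs_mult)
  then show ?thesis using s by (simp add: field_simps)
qed

lemma tail_bound:
  assumes lower: "\<And>k. n < k \<Longrightarrow> a n k = 0" and nonneg: "\<And>k. 0 \<le> a n k"
    and condn: "\<And>m. m \<le> n \<Longrightarrow> (\<Sum>k\<in>{m..n}. Tt a n \<beta> k) \<le> C0 * a n m"
    and v: "v \<le> n" and beta: "0 \<le> \<beta>" and s: "0 < sin (u/2)"
  shows "\<bar>\<Sum>k\<in>{v..n}. a n k * sin ((real k + 1/2) * u)\<bar> \<le> 2 powr (\<beta> + 1) * C0 * a n v / sin (u/2)"
proof -
  define b where "b k = a n k / (real k + 1) powr \<beta>" for k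
  define c where "c k = (real k + 1) powr \<beta>" for k
  define w where "w k = c k * sin ((real k + 1/2) * u)" for k
  define p where "p = n - v"
  have np: "n = v + p" using v unfolding p_def by simp
  have cpos: "0 < c k" for k unfolding c_def by simp
  have cmono: "c k \<le> c (Suc k)" for k unfolding c_def using beta by (intro powr_mono2) auto
  have c2: "c (Suc k) \<le> 2 powr \<beta> * c k" for k
  proof -
    have "c (Suc k) \<le> (2 * (real k + 1)) powr \<beta>" unfolding c_def using beta by (intro powr_mono2) auto
    also have "\<dots> = 2 powr \<beta> * c k" unfolding c_def using powr_mult[of 2 "real k + 1" \<beta>] by simp
    finally show ?thesis .
  qed
  have ab: "a n k * sin ((real k + 1/2) * u) = b k * w k" for k
    using cpos[of k] unfolding b_def w_def c_def by simp
  have bn: "b (Suc (v + p)) = 0" using lower[of "Suc n"] np unfolding b_def by simp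
  have W: "\<bar>\<Sum>j\<in>{v..k}. w j\<bar> \<le> 2 * (1 / sin (u/2)) * c (Suc k)" if "v \<le> k" for k
  proof -
    have "{v..k} = {v..v + (k - v)}" using that by simp
    moreover have "\<bar>\<Sum>j\<in>{v..v + (k - v)}. c j * sin ((real j + 1/2) * u)\<bar> \<le> 2 * (1 / sin (u/2)) * c (Suc (v + (k - v)))"
    proof (rule abel_bound)
      show "c j \<le> c (Suc j)" for j by (rule cmono)
      show "0 \<le> c j" for j using cpos[of j] by simp
      fix j assume "v \<le> j"
      then have "{v..j} = {v..v + (j - v)}" by simp
      then show "\<bar>\<Sum>i\<in>{v..j}. sin ((real i + 1/2) * u)\<bar> \<le> 1 / sin (u/2)"
        using sin_partial[OF s, of v "j - v"] by simp
    qed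
    ultimately show ?thesis using that unfolding w_def by simp
  qed
  have "(\<Sum>k\<in>{v..n}. a n k * sin ((real k + 1/2) * u)) = (\<Sum>k\<in>{v..v+p}. b k * w k)"
    unfolding ab using np by simp
  also have "\<dots> = (\<Sum>k\<in>{v..v+p}. (b k - b (Suc k)) * (\<Sum>j\<in>{v..k}. w j))"
    unfolding abel[of b w v p] bn by simp
  finally have eq: "(\<Sum>k\<in>{v..n}. a n k * sin ((real k + 1/2) * u)) = (\<Sum>k\<in>{v..v+p}. (b k - b (Suc k)) * (\<Sum>j\<in>{v..k}. w j))" .
  have "\<bar>\<Sum>k\<in>{v..v+p}. (b k - b (Suc k)) * (\<Sum>j\<in>{v..k}. w j)\<bar> \<le>
        (\<Sum>k\<in>{v..v+p}. \<bar>(b k - b (Suc k)) * (\<Sum>j\<in>{v..k}. w j)\<bar>)" by (rule sum_abs)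
  also have "\<dots> \<le> (\<Sum>k\<in>{v..v+p}. (2 powr (\<beta> + 1) / sin (u/2)) * Tt a n \<beta> k)"
  proof (rule sum_mono)
    fix k assume k: "k \<in> {v..v+p}"
    have "\<bar>(b k - b (Suc k)) * (\<Sum>j\<in>{v..k}. w j)\<bar> \<le> \<bar>b k - b (Suc k)\<bar> * (2 * (1 / sin (u/2)) * c (Suc k))"
      unfolding abs_mult using k W[of k] by (intro mult_left_mono) auto
    also have "\<dots> \<le> \<bar>b k - b (Suc k)\<bar> * (2 * (1 / sin (u/2)) * (2 powr \<beta> * c k))"
      using s c2[of k] by (intro mult_left_mono) auto
    also have "\<dots> = (2 powr (\<beta> + 1) / sin (u/2)) * Tt a n \<beta> k"
      unfolding Tt_alt b_def c_def by (simp add: powr_add field_simps)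
    finally show "\<bar>(b k - b (Suc k)) * (\<Sum>j\<in>{v..k}. w j)\<bar> \<le> (2 powr (\<beta> + 1) / sin (u/2)) * Tt a n \<beta> k" .
  qed
  also have "\<dots> = (2 powr (\<beta> + 1) / sin (u/2)) * (\<Sum>k\<in>{v..n}. Tt a n \<beta> k)"
    using np by (simp add: sum_distrib_left)
  also have "\<dots> \<le> (2 powr (\<beta> + 1) / sin (u/2)) * (C0 * a n v)"
    using s by (intro mult_left_mono condn v) auto
  finally show ?thesis unfolding eq by simp
qed

lemma Kn_bound1:
  assumes lower: "\<And>k. n < k \<Longrightarrow> a n k = 0" and nonneg: "\<And>k. 0 \<le> a n k"
    and condn: "\<And>m. m \<le> n \<Longrightarrow> (\<Sum>k\<in>{m..n}. Tt a n \<beta> k) \<le> C0 * a n m"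
    and beta: "0 \<le> \<beta>" and C0: "0 \<le> C0"
    and v: "1 \<le> v" "v \<le> n" and u: "pi / (real v + 1) \<le> u" "u \<le> pi / real v"
  shows "\<bar>Kn a n u\<bar> \<le> (4 / pi * (1 + 2 powr (\<beta> + 1) * 8 * C0 * C0 / pi)) * (real v + 1) * (\<Sum>j\<in>{0..v}. a n j)"
proof -
  define A where "A = (\<Sum>j\<in>{0..v}. a n j)"
  define E where "E = 1 + 2 powr (\<beta> + 1) * 8 * C0 * C0 / pi"
  define s where "s = sin (u/2)"
  define L where "L = 8 * (real v + 1) / pi"
  have pi0: "0 < pi" by (rule pi_gt_zero)
  have vpos: "0 < real v" using v by simp
  have "0 < pi / (real v + 1)" using pi0 by simp
  then have u0: "0 < u" using u(1) by linarith
  have "pi / real v \<le> pi / 1" using pi0 v by (intro divide_left_mono) auto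
  then have u1: "u \<le> pi" using u(2) by simp
  have s8: "u / 8 \<le> s" unfolding s_def using sin_lower[of "u/2"] u0 u1 by simp
  have "pi / (8 * (real v + 1)) \<le> u / 8" using u(1) by (simp add: field_simps)
  with s8 have s1: "pi / (8 * (real v + 1)) \<le> s" by linarith
  have "0 < pi / (8 * (real v + 1))" using pi0 by simp
  then have spos: "0 < s" using s1 by linarith
  have spos': "0 < sin (u/2)" using spos unfolding s_def .
  have sL: "1 / s \<le> L" unfolding L_def
  proof -
    have "1 / s \<le> 1 / (pi / (8 * (real v + 1)))"
      using s1 spos pi0 vpos by (intro divide_left_mono) auto
    then show "1 / s \<le> 8 * (real v + 1) / pi" by simp
  qed
  have A0: "0 \<le> A" unfolding A_def by (intro sum_nonneg nonneg)
  have rep: "2 * s * Kn a n u = (\<Sum>k\<in>{0..n}. a n k * sin ((real k + 1/2) * u))"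
    unfolding Kn_def sum_distrib_left s_def
  proof (rule sum.cong[OF refl])
    fix k show "2 * sin (u / 2) * (a n k * Dk k u) = a n k * sin ((real k + 1/2) * u)"
      using Dk_sin[of u k] by (simp add: algebra_simps)
  qed
  have split: "{0..n} = {0..<v} \<union> {v..n}" using v by auto
  have "(\<Sum>k\<in>{0..n}. a n k * sin ((real k + 1/2) * u)) =
    (\<Sum>k\<in>{0..<v}. a n k * sin ((real k + 1/2) * u)) + (\<Sum>k\<in>{v..n}. a n k * sin ((real k + 1/2) * u))"
    unfolding split by (rule sum.union_disjoint) auto
  then have "\<bar>2 * s * Kn a n u\<bar> \<le> \<bar>\<Sum>k\<in>{0..<v}. a n k * sin ((real k + 1/2) * u)\<bar>
      + \<bar>\<Sum>k\<in>{v..n}. a n k * sin ((real k + 1/2) * u)\<bar>"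
    unfolding rep by linarith
  also have "\<bar>\<Sum>k\<in>{0..<v}. a n k * sin ((real k + 1/2) * u)\<bar> \<le> A"
  proof -
    have "\<bar>\<Sum>k\<in>{0..<v}. a n k * sin ((real k + 1/2) * u)\<bar> \<le> (\<Sum>k\<in>{0..<v}. \<bar>a n k * sin ((real k + 1/2) * u)\<bar>)"
      by (rule sum_abs)
    also have "\<dots> \<le> (\<Sum>k\<in>{0..<v}. a n k)"
      by (rule sum_mono) (auto simp: abs_mult nonneg intro!: mult_left_le)
    also have "\<dots> \<le> A" unfolding A_def by (intro sum_mono2) (auto simp: nonneg)
    finally show ?thesis .
  qed
  also have "\<bar>\<Sum>k\<in>{v..n}. a n k * sin ((real k + 1/2) * u)\<bar> \<le> 2 powr (\<beta> + 1) * C0 * a n v / s"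
    unfolding s_def by (rule tail_bound[OF lower nonneg condn v(2) beta spos'])
  also have "2 powr (\<beta> + 1) * C0 * a n v / s \<le> 2 powr (\<beta> + 1) * C0 * a n v * L"
    using sL C0 nonneg[of v] by (simp add: divide_inverse mult_left_mono)
  also have "2 powr (\<beta> + 1) * C0 * a n v * L = 2 powr (\<beta> + 1) * C0 * 8 / pi * ((real v + 1) * a n v)"
    unfolding L_def by (simp add: field_simps)
  also have "\<dots> \<le> 2 powr (\<beta> + 1) * C0 * 8 / pi * (C0 * A)"
    unfolding A_def using C0 pi0
    by (intro mult_left_mono sumA[OF lower nonneg condn v(2) beta]) auto
  also have "A + 2 powr (\<beta> + 1) * C0 * 8 / pi * (C0 * A) = E * A"
    unfolding E_def by (simp add: algebra_simps)
  finally have "\<bar>2 * s * Kn a n u\<bar> \<le> E * A" by auto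
  then have "2 * s * \<bar>Kn a n u\<bar> \<le> E * A" using spos by (simp add: abs_mult)
  then have "\<bar>Kn a n u\<bar> \<le> E * A * (1 / s) / 2" using spos by (simp add: field_simps)
  also have "\<dots> \<le> E * A * L / 2"
    using sL A0 C0 pi0 unfolding E_def by (intro divide_right_mono mult_left_mono) auto
  also have "\<dots> = (4 / pi * E) * (real v + 1) * A" unfolding L_def by (simp add: field_simps)
  finally show ?thesis unfolding A_def E_def .
qed

lemma decomp:
  fixes G :: "real \<Rightarrow> real"
  assumes cont: "continuous_on UNIV G"
  shows "integral {0..pi} G = integral {0..pi / (real n + 1)} G +
           (\<Sum>v\<in>{1..n}. integral {pi / (real v + 1)..pi / real v} G)"
proof (induction n)
  case 0
  then show ?case by simp
next
  case (Suc n)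
  have pi0: "0 < pi" by (rule pi_gt_zero)
  have le1: "0 \<le> pi / (real n + 2)" using pi0 by simp
  have le2: "pi / (real n + 2) \<le> pi / (real n + 1)" using pi0 by (intro divide_left_mono) auto
  have "integral {0..pi / (real n + 2)} G + integral {pi / (real n + 2)..pi / (real n + 1)} G
      = integral {0..pi / (real n + 1)} G"
    by (rule Henstock_Kurzweil_Integration.integral_combine[OF le1 le2]) (rule cont_int[OF cont])
  then show ?case using Suc by (simp add: add.commute add.left_commute)
qed

lemma piece_bound:
  fixes G :: "real \<Rightarrow> real"
  assumes cont: "continuous_on UNIV G" and cd: "c \<le> d" and M: "\<And>u. c \<le> u \<Longrightarrow> u \<le> d \<Longrightarrow> G u \<le> M"
  shows "integral {c..d} G \<le> M * (d - c)"
proof -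
  have "integral {c..d} G \<le> integral {c..d} (\<lambda>_. M)"
    by (rule integral_le) (auto intro: cont_int[OF cont] M)
  then show ?thesis using cd by (simp add: mult.commute)
qed

lemma pointwise_bound:
  fixes f :: "real \<Rightarrow> real"
  assumes cont: "continuous_on UNIV f" and per: "\<And>x. f (x + 2 * pi) = f x"
    and lower: "\<And>k. n < k \<Longrightarrow> a n k = 0" and nonneg: "\<And>k. 0 \<le> a n k"
    and rowsum: "(\<Sum>k\<in>{0..n}. a n k) = 1"
    and condn: "\<And>m. m \<le> n \<Longrightarrow> (\<Sum>k\<in>{m..n}. Tt a n \<beta> k) \<le> C0 * a n m"
    and beta: "0 \<le> \<beta>" and C0: "0 \<le> C0" and B: "\<And>x. \<bar>f x\<bar> \<le> B"
  shows "\<bar>T_mean a f n x - f x\<bar> \<le> 2 * modulus_cont f (pi / (real n + 1)) +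
     2 * (4 / pi * (1 + 2 powr (\<beta> + 1) * 8 * C0 * C0 / pi)) *
       (\<Sum>v\<in>{1..n}. (1 / real v) * modulus_cont f (pi / real v) * (\<Sum>j\<in>{0..v}. a n j))"
proof -
  define Dc where "Dc = 4 / pi * (1 + 2 powr (\<beta> + 1) * 8 * C0 * C0 / pi)"
  define W where "W = modulus_cont f"
  define A where "A v = (\<Sum>j\<in>{0..v}. a n j)" for v
  define h where "h u = (f (x + u) - f x) * Kn a n u" for u
  define F where "F u = \<bar>f (x + u) - f x\<bar> * \<bar>Kn a n u\<bar>" for u
  define G where "G u = F u + F (-u)" for u
  have pi0: "0 < pi" by (rule pi_gt_zero)
  have fxc: "continuous_on UNIV (\<lambda>u. f (x + u))"
    by (intro continuous_on_compose2[OF cont] continuous_intros) auto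
  have hc: "continuous_on UNIV h" unfolding h_def by (intro continuous_intros Kn_cont fxc)
  have Fc: "continuous_on UNIV F" unfolding F_def by (intro continuous_intros Kn_cont fxc)
  have Fmc: "continuous_on UNIV (\<lambda>u. F (-u))"
    by (intro continuous_on_compose2[OF Fc] continuous_intros) auto
  have Gc: "continuous_on UNIV G" unfolding G_def by (intro continuous_intros Fc Fmc)
  have Gb: "G u \<le> 2 * W \<delta> * \<bar>Kn a n u\<bar>" if "0 \<le> u" "u \<le> \<delta>" for u \<delta>
  proof -
    have 1: "\<bar>f (x + u) - f x\<bar> \<le> W \<delta>" unfolding W_def
      using modulus_le[OF B, where h=u and \<delta>=\<delta> and y=x] that by (simp add: add.commute)
    have 2: "\<bar>f (x + - u) - f x\<bar> \<le> W \<delta>" unfolding W_def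
      using modulus_le[OF B, where h="-u" and \<delta>=\<delta> and y=x] that by (simp add: add.commute)
    have "F u \<le> W \<delta> * \<bar>Kn a n u\<bar>" unfolding F_def by (intro mult_right_mono 1) simp
    moreover have "F (-u) \<le> W \<delta> * \<bar>Kn a n u\<bar>" unfolding F_def Kn_even by (intro mult_right_mono 2) simp
    ultimately show ?thesis unfolding G_def by simp
  qed
  have Wnn: "0 \<le> W \<delta>" if "0 \<le> \<delta>" for \<delta> unfolding W_def by (rule modulus_nonneg[OF B that])
  have A0: "0 \<le> A v" for v unfolding A_def by (intro sum_nonneg nonneg)
  have Teq: "\<bar>T_mean a f n x - f x\<bar> = (1/pi) * \<bar>integral {-pi..pi} h\<bar>"
    unfolding main_rep[of f a n, OF cont per rowsum] h_def using pi0 by (simp add: abs_mult)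
  have "\<bar>integral {-pi..pi} h\<bar> \<le> integral {-pi..pi} F"
    using integral_norm_bound_integral[of h "{-pi..pi}" F] cont_int[OF hc] cont_int[OF Fc]
    unfolding h_def F_def by (simp add: abs_mult)
  also have "integral {-pi..pi} F = integral {0..pi} G"
  proof -
    have "integral {-pi..pi} F = integral {-pi..0} F + integral {0..pi} F"
      by (rule Henstock_Kurzweil_Integration.integral_combine[symmetric]) (use pi0 cont_int[OF Fc] in auto)
    also have "integral {-pi..0} F = integral {0..pi} (\<lambda>u. F (-u))"
      using Henstock_Kurzweil_Integration.integral_reflect_real[of pi 0 "\<lambda>u. F (-u)"] by simp
    also have "integral {0..pi} (\<lambda>u. F (-u)) + integral {0..pi} F = integral {0..pi} G"
      unfolding G_def using integral_add[OF cont_int[OF Fc] cont_int[OF Fmc], of 0 pi] by simp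
    finally show ?thesis .
  qed
  also have "integral {0..pi} G = integral {0..pi / (real n + 1)} G +
           (\<Sum>v\<in>{1..n}. integral {pi / (real v + 1)..pi / real v} G)"
    by (rule decomp[OF Gc])
  also have "\<dots> \<le> 2 * pi * W (pi / (real n + 1)) + (\<Sum>v\<in>{1..n}. 2 * pi * Dc * ((1 / real v) * W (pi / real v) * A v))"
  proof (rule add_mono)
    have "integral {0..pi / (real n + 1)} G \<le> (2 * W (pi / (real n + 1)) * (real n + 1)) * (pi / (real n + 1) - 0)"
    proof (rule piece_bound[OF Gc])
      show "0 \<le> pi / (real n + 1)" using pi0 by simp
      fix u assume u: "0 \<le> u" "u \<le> pi / (real n + 1)"
      have "G u \<le> 2 * W (pi / (real n + 1)) * \<bar>Kn a n u\<bar>" by (rule Gb[OF u])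
      also have "\<dots> \<le> 2 * W (pi / (real n + 1)) * (real n + 1)"
        using Wnn[of "pi / (real n + 1)"] pi0 Kn_bound0[of a n, OF nonneg rowsum, of u]
        by (intro mult_left_mono) auto
      finally show "G u \<le> 2 * W (pi / (real n + 1)) * (real n + 1)" .
    qed
    moreover have "(2 * W (pi / (real n + 1)) * (real n + 1)) * (pi / (real n + 1) - 0) = 2 * pi * W (pi / (real n + 1))"
      by (simp add: field_simps)
    ultimately show "integral {0..pi / (real n + 1)} G \<le> 2 * pi * W (pi / (real n + 1))"
      by linarith
  next
    show "(\<Sum>v\<in>{1..n}. integral {pi / (real v + 1)..pi / real v} G) \<le>
       (\<Sum>v\<in>{1..n}. 2 * pi * Dc * ((1 / real v) * W (pi / real v) * A v))"
    proof (rule sum_mono)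
      fix v assume v: "v \<in> {1..n}"
      have vpos: "0 < real v" using v by simp
      have "integral {pi / (real v + 1)..pi / real v} G \<le> (2 * W (pi / real v) * (Dc * (real v + 1) * A v)) * (pi / real v - pi / (real v + 1))"
      proof (rule piece_bound[OF Gc])
        show "pi / (real v + 1) \<le> pi / real v" using pi0 vpos by (intro divide_left_mono) auto
        fix u assume u: "pi / (real v + 1) \<le> u" "u \<le> pi / real v"
        have u0: "0 \<le> u" using u(1) pi0 by (smt (verit) divide_nonneg_nonneg of_nat_0_le_iff)
        have "G u \<le> 2 * W (pi / real v) * \<bar>Kn a n u\<bar>" by (rule Gb[OF u0 u(2)])
        also have "\<dots> \<le> 2 * W (pi / real v) * (Dc * (real v + 1) * A v)"
          using Wnn[of "pi / real v"] pi0 vpos unfolding Dc_def A_def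
          by (intro mult_left_mono Kn_bound1[OF lower nonneg condn beta C0 _ _ u]) (use v in auto)
        finally show "G u \<le> 2 * W (pi / real v) * (Dc * (real v + 1) * A v)" .
      qed
      also have "\<dots> = 2 * pi * Dc * ((1 / real v) * W (pi / real v) * A v)"
      proof -
        have v1: "real v + 1 \<noteq> 0" using vpos by simp
        have d: "pi / real v - pi / (real v + 1) = pi / (real v * (real v + 1))"
          using vpos v1 by (simp add: field_simps)
        have v2: "real v + real v * real v \<noteq> 0" using vpos
          by (metis add_pos_pos less_irrefl mult_pos_pos)
        show ?thesis unfolding d using vpos v1 v2 by (simp add: field_simps)
      qed
      finally show "integral {pi / (real v + 1)..pi / real v} G \<le> 2 * pi * Dc * ((1 / real v) * W (pi / real v) * A v)" .
    qed
  qed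
  finally have "\<bar>integral {-pi..pi} h\<bar> \<le> (2 * pi * W (pi / (real n + 1)) + (\<Sum>v\<in>{1..n}. 2 * pi * Dc * ((1 / real v) * W (pi / real v) * A v)))" .
  then have "\<bar>T_mean a f n x - f x\<bar> \<le> (1/pi) * (2 * pi * W (pi / (real n + 1)) + (\<Sum>v\<in>{1..n}. 2 * pi * Dc * ((1 / real v) * W (pi / real v) * A v)))"
    unfolding Teq using pi0 by (intro mult_left_mono) auto
  also have "\<dots> = 2 * W (pi / (real n + 1)) + 2 * Dc * (\<Sum>v\<in>{1..n}. (1 / real v) * W (pi / real v) * A v)"
    using pi0 by (simp add: field_simps sum_distrib_left)
  finally show ?thesis unfolding Dc_def W_def A_def .
qed

theorem theorem3p3:
  fixes f :: "real \<Rightarrow> real" and a :: "nat \<Rightarrow> nat \<Rightarrow> real" and \<beta> :: real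
  assumes cont: "continuous_on UNIV f"
    and periodic: "\<And>x. f (x + 2 * pi) = f x"
    and lower: "\<And>n k. k > n \<Longrightarrow> a n k = 0"
    and nonneg: "\<And>n k. a n k \<ge> 0"
    and rowsum: "\<And>n. (\<Sum>k\<in>{0..n}. a n k) = 1"
    and beta: "\<beta> \<ge> 0"
    and cond: "\<exists>C>0. \<forall>n m. m \<le> n \<longrightarrow>
        (\<Sum>k. if k \<ge> m then (real k + 1) powr \<beta> *
              \<bar>a n k / (real k + 1) powr \<beta> - a n (k + 1) / (real k + 2) powr \<beta>\<bar> else 0)
        \<le> C * a n m"
  shows "\<exists>C>0. \<forall>n.
      sup_norm (\<lambda>x. T_mean a f n x - f x)
      \<le> C * (modulus_cont f (pi / (real n + 1)) +
             (\<Sum>v\<in>{1..n}. (1 / real v) * modulus_cont f (pi / real v) * (\<Sum>j\<in>{0..v}. a n j)))"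
proof -
  obtain C0 where C0: "C0 > 0" and c0: "\<And>n m. m \<le> n \<Longrightarrow>
        (\<Sum>k. if k \<ge> m then (real k + 1) powr \<beta> *
              \<bar>a n k / (real k + 1) powr \<beta> - a n (k + 1) / (real k + 2) powr \<beta>\<bar> else 0)
        \<le> C0 * a n m"
    using cond by blast
  have condn: "(\<Sum>k\<in>{m..n}. Tt a n \<beta> k) \<le> C0 * a n m" if "m \<le> n" for n m
  proof -
    have "(\<Sum>k. if k \<ge> m then (real k + 1) powr \<beta> *
              \<bar>a n k / (real k + 1) powr \<beta> - a n (k + 1) / (real k + 2) powr \<beta>\<bar> else 0)
          = (\<Sum>k\<in>{m..n}. if k \<ge> m then (real k + 1) powr \<beta> *
              \<bar>a n k / (real k + 1) powr \<beta> - a n (k + 1) / (real k + 2) powr \<beta>\<bar> else 0)"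
    proof (rule suminf_finite)
      fix k assume "k \<notin> {m..n}"
      then have "k < m \<or> n < k" by auto
      then show "(if k \<ge> m then (real k + 1) powr \<beta> *
              \<bar>a n k / (real k + 1) powr \<beta> - a n (k + 1) / (real k + 2) powr \<beta>\<bar> else 0) = 0"
        using lower[of n k] lower[of n "k+1"] by auto
    qed simp
    also have "\<dots> = (\<Sum>k\<in>{m..n}. Tt a n \<beta> k)"
      by (rule sum.cong) (auto simp: Tt_def)
    finally show ?thesis using c0[OF that] by simp
  qed
  obtain B where B: "\<And>x. \<bar>f x\<bar> \<le> B" using cont_bounded[OF cont periodic] by blast
  define Dc where "Dc = 4 / pi * (1 + 2 powr (\<beta> + 1) * 8 * C0 * C0 / pi)"
  have Dc0: "0 \<le> Dc" unfolding Dc_def using C0 pi_gt_zero by simp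
  show ?thesis
  proof (intro exI[of _ "2 + 2 * Dc"] conjI allI)
    show "0 < 2 + 2 * Dc" using Dc0 by simp
    fix n
    define W0 where "W0 = modulus_cont f (pi / (real n + 1))"
    define S where "S = (\<Sum>v\<in>{1..n}. (1 / real v) * modulus_cont f (pi / real v) * (\<Sum>j\<in>{0..v}. a n j))"
    have W0: "0 \<le> W0" unfolding W0_def using pi_gt_zero by (intro modulus_nonneg[OF B]) simp
    have S0: "0 \<le> S" unfolding S_def
      by (intro sum_nonneg mult_nonneg_nonneg modulus_nonneg[OF B] sum_nonneg nonneg) (auto simp: pi_gt_zero less_imp_le)
    have pw: "\<bar>T_mean a f n x - f x\<bar> \<le> 2 * W0 + 2 * Dc * S" for x
      unfolding W0_def S_def Dc_def
      by (rule pointwise_bound[OF cont periodic lower nonneg rowsum condn beta]) (use C0 B in auto)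
    have "sup_norm (\<lambda>x. T_mean a f n x - f x) \<le> 2 * W0 + 2 * Dc * S"
      unfolding sup_norm_def by (rule cSUP_least) (auto intro: pw)
    also have "\<dots> \<le> (2 + 2 * Dc) * (W0 + S)"
      using W0 S0 Dc0 by (simp add: algebra_simps)
    finally show "sup_norm (\<lambda>x. T_mean a f n x - f x) \<le> (2 + 2 * Dc) * (modulus_cont f (pi / (real n + 1)) +
             (\<Sum>v\<in>{1..n}. (1 / real v) * modulus_cont f (pi / real v) * (\<Sum>j\<in>{0..v}. a n j)))"
      unfolding W0_def S_def .
  qed
qed

end
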